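(* Suppose $q\in(0,\infty)$, $p\in(0,q]$ and $s\in\mathbb{R}$. Then for any $c_0>0$, $c_1>1$, there is a continuous embedding $Z^{p,q}_s(\mathbb{R}^n;c_0,c_1)\hookrightarrow T^{p,q}_s(\mathbb{R}^n)$.
   Context: $\mathbb{R}^n$ with Euclidean distance and Lebesgue measure, $V(x,t)=|B(x,t)|$; $\mathbb{R}^{n+1}_+:=\mathbb{R}^n\times(0,\infty)$ with measure $dy\,dt/t$. $\Gamma(x):=\{(y,t):|x-y|<t\}$; $\mathcal{A}^qf(x):=(\iint_{\Gamma(x)}|f|^q\frac{dy}{V(y,t)}\frac{dt}{t})^{1/q}$; $(V^sf)(y,t):=V(y,t)^sf(y,t)$; $\|f\|_{T^{p,q}_s(\mathbb{R}^n)}:=\|\mathcal{A}^q(V^{-s}f)\|_{L^p(\mathbb{R}^n)}$. $\Omega_{c_0,c_1}(x,t):=B(x,c_0t)\times(t/c_1,c_1t)$; $\mathcal{W}^q_{c_0,c_1}f(x,t):=(\text{average of }|f(\xi,\tau)|^q\text{ over }\Omega_{c_0,c_1}(x,t)\text{ w.r.t. }d\xi\,d\tau)^{1/q}$; $\|f\|_{Z^{p,q}_s(\mathbb{R}^n;c_0,c_1)}:=\|\mathcal{W}^q_{c_0,c_1}(V^{-s}f)\|_{L^p(\mathbb{R}^{n+1}_+,dx\,dt/t)}$. *)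

theory Defs
  imports "HOL-Analysis.Analysis"
begin

text \<open>Real power on [0,\<infinity>], with \<infinity> mapped to \<infinity> (used for positive exponents only).\<close>
definition epow :: "ennreal \<Rightarrow> real \<Rightarrow> ennreal" where
  "epow x r = (if x = \<infinity> then \<infinity> else ennreal (enn2real x powr r))"

definition Vol :: "'a::euclidean_space \<Rightarrow> real \<Rightarrow> real" where
  "Vol x t = measure lborel (ball x t)"

definition Vpow :: "real \<Rightarrow> ('a::euclidean_space \<times> real \<Rightarrow> real) \<Rightarrow> 'a \<times> real \<Rightarrow> real" where
  "Vpow s f = (\<lambda>(y,t). Vol y t powr s * f (y,t))"

definition cone :: "'a::euclidean_space \<Rightarrow> ('a \<times> real) set" where
  "cone x = {(y,t). dist x y < t}"

definition Aq :: "real \<Rightarrow> ('a::euclidean_space \<times> real \<Rightarrow> real) \<Rightarrow> 'a \<Rightarrow> ennreal" where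
  "Aq q f x = epow (\<integral>\<^sup>+ (y,t). indicator (cone x) (y,t) *
        ennreal (\<bar>f (y,t)\<bar> powr q / Vol y t / t) \<partial>(lborel \<Otimes>\<^sub>M lborel)) (1/q)"

definition T_norm :: "real \<Rightarrow> real \<Rightarrow> real \<Rightarrow> ('a::euclidean_space \<times> real \<Rightarrow> real) \<Rightarrow> ennreal" where
  "T_norm p q s f = epow (\<integral>\<^sup>+ x. epow (Aq q (Vpow (-s) f) x) p \<partial>lborel) (1/p)"

definition Whitney_region :: "real \<Rightarrow> real \<Rightarrow> 'a::euclidean_space \<Rightarrow> real \<Rightarrow> ('a \<times> real) set" where
  "Whitney_region c0 c1 x t = ball x (c0 * t) \<times> {t / c1 <..< c1 * t}"

definition Wq :: "real \<Rightarrow> real \<Rightarrow> real \<Rightarrow> ('a::euclidean_space \<times> real \<Rightarrow> real) \<Rightarrow> 'a \<times> real \<Rightarrow> ennreal" where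
  "Wq c0 c1 q f = (\<lambda>(x,t). epow
      ((\<integral>\<^sup>+ z. indicator (Whitney_region c0 c1 x t) z * ennreal (\<bar>f z\<bar> powr q) \<partial>(lborel \<Otimes>\<^sub>M lborel))
        / emeasure (lborel \<Otimes>\<^sub>M lborel) (Whitney_region c0 c1 x t)) (1/q))"

definition Z_norm :: "real \<Rightarrow> real \<Rightarrow> real \<Rightarrow> real \<Rightarrow> real \<Rightarrow> ('a::euclidean_space \<times> real \<Rightarrow> real) \<Rightarrow> ennreal" where
  "Z_norm p q s c0 c1 f = epow (\<integral>\<^sup>+ (x,t). indicator {(x::'a,t). 0 < t} (x,t) *
        epow (Wq c0 c1 q (Vpow (-s) f) (x,t)) p * ennreal (1/t) \<partial>(lborel \<Otimes>\<^sub>M lborel)) (1/p)"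

end

theory Submission
  imports Defs "HOL-Library.Nat_Bijection"
begin


lemma epow_fin: "x \<noteq> \<infinity> \<Longrightarrow> epow x r = ennreal (enn2real x powr r)"
  by (simp add: epow_def)

lemma epow_top[simp]: "epow top r = top" by (simp add: epow_def)

lemma epow_ennreal: "0 \<le> u \<Longrightarrow> epow (ennreal u) r = ennreal (u powr r)"
  by (simp add: epow_def)

lemma epow_zero[simp]: "epow 0 r = 0" by (simp add: epow_def)

lemma epow_mono: assumes "x \<le> y" "0 \<le> r" shows "epow x r \<le> epow y r"
proof (cases "y = \<infinity>")
  case True thus ?thesis by simp
next
  case False
  then have xf: "x \<noteq> \<infinity>" using assms(1) by (auto simp: top_unique)
  have "enn2real x \<le> enn2real y" using assms(1) False by (simp add: enn2real_mono top.not_eq_extremum)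
  then show ?thesis using xf False assms(2) by (simp add: epow_def powr_mono2)
qed

lemma epow_epow: assumes "0 < a" shows "epow (epow x a) b = epow x (a*b)"
proof (cases "x = \<infinity>")
  case True thus ?thesis by simp
next
  case False
  then show ?thesis by (simp add: epow_def powr_powr)
qed

lemma epow_one[simp]: "epow x 1 = x"
  by (cases x) (auto simp: epow_def)

lemma epow_mult: assumes "0 \<le> c" "0 < r" shows "epow (ennreal c * x) r = ennreal (c powr r) * epow x r"
proof (cases "x = \<infinity>")
  case True
  show ?thesis
  proof (cases "c = 0")
    case True thus ?thesis using \<open>x = \<infinity>\<close> by simp
  next
    case False thus ?thesis using \<open>x = \<infinity>\<close> assms by (simp add: ennreal_mult_top)
  qed
next
  case False
  then obtain u where u: "x = ennreal u" "0 \<le> u" by (cases x) auto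
  then show ?thesis using assms
    by (simp add: epow_ennreal ennreal_mult[symmetric] powr_mult)
qed

lemma powr_subadd:
  fixes x y r :: real
  assumes "0 \<le> x" "0 \<le> y" "0 < r" "r \<le> 1"
  shows "(x + y) powr r \<le> x powr r + y powr r"
proof (cases "x + y = 0")
  case True thus ?thesis using assms by auto
next
  case False
  then have s: "0 < x + y" using assms by auto
  have h: "u \<le> u powr r" if "0 \<le> u" "u \<le> 1" for u :: real
  proof (cases "u = 0")
    case True thus ?thesis by simp
  next
    case False
    then have "u powr 1 \<le> u powr r" using that assms
      by (intro powr_mono') auto
    thus ?thesis using False that by simp
  qed
  have "(x+y) powr r = (x+y) powr r * (x/(x+y) + y/(x+y))" using s by (simp add: add_divide_distrib[symmetric])
  also have "\<dots> \<le> (x+y) powr r * ((x/(x+y)) powr r + (y/(x+y)) powr r)"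
    using s assms by (intro mult_left_mono add_mono h) auto
  also have "\<dots> = x powr r + y powr r"
    using s assms by (simp add: powr_divide distrib_left)
  finally show ?thesis .
qed

lemma epow_subadd:
  assumes "0 < r" "r \<le> 1" shows "epow (x + y) r \<le> epow x r + epow y r"
proof (cases "x = \<infinity> \<or> y = \<infinity>")
  case True thus ?thesis by auto
next
  case False
  then obtain u v where "x = ennreal u" "y = ennreal v" "0 \<le> u" "0 \<le> v" by (cases x; cases y) auto
  then show ?thesis using assms
    by (simp add: epow_ennreal ennreal_plus[symmetric] powr_subadd del: ennreal_plus)
qed

lemma epow_sum_subadd:
  assumes "0 < r" "r \<le> 1" shows "epow (\<Sum>i\<in>I. f i) r \<le> (\<Sum>i\<in>I. epow (f i) r)"
proof (induction I rule: infinite_finite_induct)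
  case (insert i I)
  have "epow (\<Sum>i\<in>insert i I. f i) r = epow (f i + (\<Sum>i\<in>I. f i)) r" using insert by simp
  also have "\<dots> \<le> epow (f i) r + epow (\<Sum>i\<in>I. f i) r" by (rule epow_subadd[OF assms])
  also have "\<dots> \<le> epow (f i) r + (\<Sum>i\<in>I. epow (f i) r)" using insert by (intro add_left_mono)
  finally show ?case using insert by simp
qed auto

lemma epow_suminf_subadd:
  assumes "0 < r" "r \<le> 1" shows "epow (\<Sum>i. f i) r \<le> (\<Sum>i. epow (f i) r)"
proof -
  define L where "L = (\<Sum>i. epow (f i) r)"
  have "sum f {..<N} \<le> epow L (1/r)" for N
  proof -
    have "epow (sum f {..<N}) r \<le> L"
      using epow_sum_subadd[OF assms, of f "{..<N}"] unfolding L_def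
      by (meson order_trans sum_le_suminf summableI zero_le finite_lessThan)
    then have "epow (epow (sum f {..<N}) r) (1/r) \<le> epow L (1/r)"
      using assms by (intro epow_mono) auto
    then show ?thesis using assms by (simp add: epow_epow)
  qed
  then have "(\<Sum>i. f i) \<le> epow L (1/r)"
    by (simp add: suminf_eq_SUP SUP_least)
  then have "epow (\<Sum>i. f i) r \<le> epow (epow L (1/r)) r" using assms by (intro epow_mono) auto
  then show ?thesis using assms by (simp add: epow_epow L_def)
qed


lemma Vol_eq: "Vol (y::'a::euclidean_space) t = (if t \<le> 0 then 0 else unit_ball_vol DIM('a) * t^DIM('a))"
  by (simp add: Vol_def content_ball)

interpretation lbpair: pair_sigma_finite "lborel :: 'a::euclidean_space measure" "lborel \<Otimes>\<^sub>M (lborel :: real measure)"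
  unfolding pair_sigma_finite_def
  by (intro conjI sigma_finite_pair_measure sigma_finite_lborel)

lemma sf_mu: "sigma_finite_measure ((lborel::'a::euclidean_space measure) \<Otimes>\<^sub>M (lborel :: real measure))"
  by (intro sigma_finite_pair_measure sigma_finite_lborel)

lemma test1:
  fixes G :: "'a::euclidean_space \<times> real \<Rightarrow> real"
  assumes [measurable]: "G \<in> borel_measurable (lborel \<Otimes>\<^sub>M lborel)"
  shows "(\<lambda>w. \<integral>\<^sup>+ u. indicator (Whitney_region c0 c1 (fst w) (snd w)) u * ennreal (G u) \<partial>(lborel \<Otimes>\<^sub>M lborel))
     \<in> borel_measurable (lborel \<Otimes>\<^sub>M lborel)"
proof -
  interpret mu: sigma_finite_measure "(lborel::'a measure) \<Otimes>\<^sub>M (lborel :: real measure)" by (rule sf_mu)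
  have [measurable]: "Measurable.pred ((lborel \<Otimes>\<^sub>M lborel) \<Otimes>\<^sub>M (lborel \<Otimes>\<^sub>M lborel))
     (\<lambda>(w::'a \<times> real,u). u \<in> Whitney_region c0 c1 (fst w) (snd w))"
    unfolding Whitney_region_def by (simp add: case_prod_beta mem_Times_iff) measurable
  show ?thesis
    by measurable
qed


definition lam :: "real \<Rightarrow> nat \<Rightarrow> real" where "lam a m = a powr (real_of_int (int_decode m))"
definition Sl :: "real \<Rightarrow> nat \<Rightarrow> real set" where "Sl a m = {lam a m ..< a * lam a m}"

lemma lam_pos: "1 < a \<Longrightarrow> 0 < lam a m" by (simp add: lam_def)

lemma Sl_exists: assumes "1 < a" "0 < t" shows "\<exists>m. t \<in> Sl a m"
proof -
  define k where "k = floor (log a t)"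
  have "a powr k \<le> a powr (log a t)" using assms unfolding k_def by (intro powr_mono) auto
  also have "\<dots> = t" using assms by simp
  finally have 1: "a powr k \<le> t" .
  have "t = a powr (log a t)" using assms by simp
  also have "\<dots> < a powr (k + 1)" using assms unfolding k_def by (intro powr_less_mono) linarith+
  also have "\<dots> = a * a powr k" using assms by (simp add: powr_add)
  finally have 2: "t < a * a powr k" .
  show ?thesis using 1 2 by (intro exI[of _ "int_encode k"]) (simp add: Sl_def lam_def)
qed

lemma Sl_floor: assumes "1 < a" "t \<in> Sl a m" shows "floor (log a t) = int_decode m"
proof -
  define k where "k = int_decode m"
  have t1: "a powr k \<le> t" and t2: "t < a * a powr k" using assms by (auto simp: Sl_def lam_def k_def)
  have "0 < a powr k" using assms(1) by simp
  then have tpos: "0 < t" using t1 by linarith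
  have "log a (a powr k) \<le> log a t" using t1 tpos assms(1) by (subst log_le_cancel_iff) auto
  then have l1: "k \<le> log a t" using assms(1) by simp
  have "a * a powr k = a powr (k+1)" using assms(1) by (simp add: powr_add)
  then have "log a t < log a (a powr (k+1))" using t2 tpos assms(1) by (subst log_less_cancel_iff) auto
  then have l2: "log a t < k + 1" using assms(1) by simp
  show ?thesis using l1 l2 unfolding k_def by linarith
qed

lemma Sl_unique: assumes "1 < a" "t \<in> Sl a m" "t \<in> Sl a m'" shows "m = m'"
  using Sl_floor[OF assms(1,2)] Sl_floor[OF assms(1,3)] by (simp add: int_decode_eq)

lemma Sl_pos: "1 < a \<Longrightarrow> t \<in> Sl a m \<Longrightarrow> 0 < t"
  using lam_pos[of a m] by (auto simp: Sl_def)

lemma suminf_indicator_Sl: assumes "1 < a" shows "(\<Sum>m. indicator (Sl a m) t :: ennreal) = indicator {0<..} t"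
proof (cases "0 < t")
  case True
  obtain m0 where m0: "t \<in> Sl a m0" using Sl_exists[OF assms True] by blast
  have "indicator (Sl a m) t = (if m = m0 then 1 else 0 :: ennreal)" for m
    using Sl_unique[OF assms m0, of m] m0 by (cases "m = m0") (auto split: split_indicator)
  then have e: "(\<lambda>m. indicator (Sl a m) t :: ennreal) = (\<lambda>m. if m = m0 then 1 else 0)"
    by (rule ext)
  have "(\<lambda>m. if m = m0 then 1 else 0::ennreal) sums 1" using sums_single[of m0 "\<lambda>_. 1::ennreal"] by simp
  then have "(\<Sum>m. indicator (Sl a m) t :: ennreal) = 1" unfolding e by (rule sums_unique[symmetric])
  then show ?thesis using True by simp
next
  case False
  have "indicator (Sl a m) t = (0::ennreal)" for m using Sl_pos[OF assms, of t m] False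
    by (auto split: split_indicator)
  then show ?thesis using False by simp
qed


definition NN :: "real \<Rightarrow> real \<Rightarrow> ('a::euclidean_space \<times> real \<Rightarrow> real) \<Rightarrow> 'a \<times> real \<Rightarrow> ennreal" where
  "NN c0 c1 G w = (\<integral>\<^sup>+ u. indicator (Whitney_region c0 c1 (fst w) (snd w)) u * ennreal (G u) \<partial>(lborel \<Otimes>\<^sub>M lborel))"

definition DD :: "real \<Rightarrow> real \<Rightarrow> 'a::euclidean_space \<times> real \<Rightarrow> ennreal" where
  "DD c0 c1 w = emeasure (lborel \<Otimes>\<^sub>M lborel) (Whitney_region c0 c1 (fst w) (snd w))"

definition HH :: "real \<Rightarrow> real \<Rightarrow> real \<Rightarrow> ('a::euclidean_space \<times> real \<Rightarrow> real) \<Rightarrow> 'a \<times> real \<Rightarrow> ennreal" where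
  "HH c0 c1 r G w = epow (NN c0 c1 G w / DD c0 c1 w) r"

lemma W_sets: "Whitney_region c0 c1 x t \<in> sets (lborel \<Otimes>\<^sub>M lborel)"
  unfolding Whitney_region_def by (intro pair_measureI) auto

lemma DD_eq: assumes "0 < c0" "1 < c1" "0 < t"
  shows "DD c0 c1 (x::'a::euclidean_space, t) = ennreal (unit_ball_vol DIM('a) * (c0*t)^DIM('a) * (c1*t - t/c1))"
proof -
  have "t / c1 \<le> t" using assms by (simp add: divide_le_eq)
  moreover have "t \<le> c1 * t" using assms by simp
  ultimately have "t / c1 \<le> c1 * t" by linarith
  then show ?thesis using assms
    by (simp add: DD_def Whitney_region_def lborel.emeasure_pair_measure_Times emeasure_ball ennreal_mult'[symmetric] mult.assoc)
qed

lemma epow_measurable[measurable]: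
  assumes [measurable]: "f \<in> borel_measurable M" shows "(\<lambda>x. epow (f x) r) \<in> borel_measurable M"
  unfolding epow_def by measurable

lemma HH_measurable[measurable]:
  fixes G :: "'a::euclidean_space \<times> real \<Rightarrow> real"
  assumes [measurable]: "G \<in> borel_measurable (lborel \<Otimes>\<^sub>M lborel)"
  shows "HH c0 c1 r G \<in> borel_measurable (lborel \<Otimes>\<^sub>M lborel)"
proof -
  interpret mu: sigma_finite_measure "(lborel::'a measure) \<Otimes>\<^sub>M (lborel :: real measure)" by (rule sf_mu)
  have [measurable]: "Measurable.pred ((lborel \<Otimes>\<^sub>M lborel) \<Otimes>\<^sub>M (lborel \<Otimes>\<^sub>M lborel))
     (\<lambda>(w::'a \<times> real,u). u \<in> Whitney_region c0 c1 (fst w) (snd w))"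
    unfolding Whitney_region_def by (simp add: case_prod_beta mem_Times_iff) measurable
  have [measurable]: "NN c0 c1 G \<in> borel_measurable (lborel \<Otimes>\<^sub>M lborel)"
    unfolding NN_def by measurable
  have e: "DD c0 c1 w = (\<integral>\<^sup>+ u. indicator (Whitney_region c0 c1 (fst w) (snd w)) u \<partial>(lborel \<Otimes>\<^sub>M lborel))" for w :: "'a \<times> real"
    unfolding DD_def by (rule nn_integral_indicator[symmetric, OF W_sets])
  have [measurable]: "DD c0 c1 \<in> borel_measurable ((lborel::'a measure) \<Otimes>\<^sub>M lborel)"
    unfolding e by measurable
  show ?thesis unfolding HH_def[abs_def] by measurable
qed


lemma ball_shift_ind: "indicator (ball (x + u) \<rho>) z = (indicator (ball (z - u) \<rho>) (x::'a::real_normed_vector) :: ennreal)"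
proof -
  have e: "z - u - x = -(x + u - z)" by (simp add: algebra_simps)
  have "dist (x + u) z = dist (z - u) x" unfolding dist_norm e norm_minus_cancel ..
  then show ?thesis by (simp add: indicator_def mem_ball)
qed

lemma xint_meas:
  fixes u :: "'a::euclidean_space" and \<rho> :: real and F :: "'a \<times> real \<Rightarrow> ennreal"
  assumes [measurable]: "F \<in> borel_measurable (lborel \<Otimes>\<^sub>M lborel)"
  shows "(\<lambda>x. \<integral>\<^sup>+ w. indicator (ball (x + u) \<rho>) (fst w) * F w \<partial>(lborel \<Otimes>\<^sub>M lborel)) \<in> borel_measurable lborel"
proof -
  interpret mu: sigma_finite_measure "(lborel::'a measure) \<Otimes>\<^sub>M (lborel :: real measure)" by (rule sf_mu)
  have [measurable]: "Measurable.pred (lborel \<Otimes>\<^sub>M (lborel \<Otimes>\<^sub>M lborel)) (\<lambda>(x::'a, w::'a \<times> real). fst w \<in> ball (x + u) \<rho>)"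
    by (simp add: case_prod_beta mem_ball) measurable
  show ?thesis by measurable
qed

lemma ennreal_term_le_suminf: "(f m :: ennreal) \<le> suminf f"
proof -
  have "f m \<le> (\<Sum>i\<in>{m}. f i)" by simp
  also have "\<dots> \<le> suminf f" by (intro sum_le_suminf summableI) auto
  finally show ?thesis .
qed

lemma xint:
  fixes u :: "'a::euclidean_space" and \<rho> K :: real and F :: "'a \<times> real \<Rightarrow> ennreal"
  assumes [measurable]: "F \<in> borel_measurable (lborel \<Otimes>\<^sub>M lborel)" and "0 \<le> \<rho>"
  shows "(\<integral>\<^sup>+ x. ennreal K * (\<integral>\<^sup>+ w. indicator (ball (x + u) \<rho>) (fst w) * F w \<partial>(lborel \<Otimes>\<^sub>M lborel)) \<partial>lborel)
     = ennreal K * ennreal (unit_ball_vol DIM('a) * \<rho>^DIM('a)) * (\<integral>\<^sup>+ w. F w \<partial>(lborel \<Otimes>\<^sub>M lborel))"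
proof -
  interpret mu: sigma_finite_measure "(lborel::'a measure) \<Otimes>\<^sub>M (lborel :: real measure)" by (rule sf_mu)
  have [measurable]: "Measurable.pred (lborel \<Otimes>\<^sub>M (lborel \<Otimes>\<^sub>M lborel)) (\<lambda>(x::'a, w::'a \<times> real). fst w \<in> ball (x + u) \<rho>)"
    by (simp add: case_prod_beta mem_ball) measurable
  have jm: "(\<lambda>(x, w). indicator (ball (x + u) \<rho>) (fst w) * F w :: ennreal) \<in> borel_measurable (lborel \<Otimes>\<^sub>M (lborel \<Otimes>\<^sub>M lborel))"
    by measurable
  have "(\<integral>\<^sup>+ x. ennreal K * (\<integral>\<^sup>+ w. indicator (ball (x + u) \<rho>) (fst w) * F w \<partial>(lborel \<Otimes>\<^sub>M lborel)) \<partial>lborel)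
     = ennreal K * (\<integral>\<^sup>+ x. (\<integral>\<^sup>+ w. indicator (ball (x + u) \<rho>) (fst w) * F w \<partial>(lborel \<Otimes>\<^sub>M lborel)) \<partial>lborel)"
    by (intro nn_integral_cmult) measurable
  also have "(\<integral>\<^sup>+ x. (\<integral>\<^sup>+ w. indicator (ball (x + u) \<rho>) (fst w) * F w \<partial>(lborel \<Otimes>\<^sub>M lborel)) \<partial>lborel)
     = (\<integral>\<^sup>+ w. (\<integral>\<^sup>+ x. indicator (ball (x + u) \<rho>) (fst w) * F w \<partial>lborel) \<partial>(lborel \<Otimes>\<^sub>M lborel))"
    using lbpair.Fubini'[OF jm] by simp
  also have "\<dots> = (\<integral>\<^sup>+ w. ennreal (unit_ball_vol DIM('a) * \<rho>^DIM('a)) * F w \<partial>(lborel \<Otimes>\<^sub>M lborel))"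
  proof (intro nn_integral_cong)
    fix w :: "'a \<times> real"
    have "(\<integral>\<^sup>+ x. indicator (ball (x + u) \<rho>) (fst w) * F w \<partial>lborel) = (\<integral>\<^sup>+ x. F w * indicator (ball (fst w - u) \<rho>) x \<partial>lborel)"
      by (simp add: ball_shift_ind mult.commute)
    also have "\<dots> = F w * emeasure lborel (ball (fst w - u) \<rho>)"
      by (rule nn_integral_cmult_indicator) simp
    also have "\<dots> = ennreal (unit_ball_vol DIM('a) * \<rho>^DIM('a)) * F w"
      using assms(2) by (simp add: emeasure_ball mult.commute)
    finally show "(\<integral>\<^sup>+ x. indicator (ball (x + u) \<rho>) (fst w) * F w \<partial>lborel) = ennreal (unit_ball_vol DIM('a) * \<rho>^DIM('a)) * F w" .
  qed
  also have "\<dots> = ennreal (unit_ball_vol DIM('a) * \<rho>^DIM('a)) * (\<integral>\<^sup>+ w. F w \<partial>(lborel \<Otimes>\<^sub>M lborel))"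
    by (intro nn_integral_cmult) measurable
  finally show ?thesis by (simp add: mult.assoc)
qed


context
  fixes c0 c1 r :: real and G :: "'a::euclidean_space \<times> real \<Rightarrow> real" and P :: "'a set"
  assumes c0: "0 < c0" and c1: "1 < c1" and r: "0 < r" "r \<le> 1"
    and Gm[measurable]: "G \<in> borel_measurable (lborel \<Otimes>\<^sub>M lborel)" and G0: "\<And>w. 0 \<le> G w"
    and Pfin: "finite P" and Pcov: "cball 0 (sqrt c1) \<subseteq> (\<Union>v\<in>P. ball v (c0/2))"
begin

lemma a_gt1: "1 < sqrt c1" using c1 by simp

lemma a_le: "sqrt c1 \<le> c1"
proof -
  have "sqrt c1 * 1 \<le> sqrt c1 * sqrt c1" using a_gt1 by (intro mult_left_mono) auto
  then show ?thesis using c1 by simp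
qed

lemma stepD:
  fixes x v :: 'a and w :: "'a \<times> real" and m :: nat
  assumes "dist (x + lam (sqrt c1) m *\<^sub>R v) (fst w) < lam (sqrt c1) m * (c0/2)" "snd w \<in> Sl (sqrt c1) m"
  shows "ennreal (1/(unit_ball_vol DIM('a) * lam (sqrt c1) m ^(DIM('a)+1))) *
      (\<integral>\<^sup>+ u. indicator (ball (x + lam (sqrt c1) m *\<^sub>R v) (lam (sqrt c1) m*(c0/2)) \<times> Sl (sqrt c1) m) u * ennreal (G u) \<partial>(lborel \<Otimes>\<^sub>M lborel))
    \<le> ennreal (c0^DIM('a) * sqrt c1^(DIM('a)+1) * (c1 - 1/c1)) * (NN c0 c1 G w / DD c0 c1 w)"
proof -
  obtain z \<tau> where w: "w = (z, \<tau>)" by (cases w)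
  define a where "a = sqrt c1"
  define l where "l = lam a m"
  define n where "n = DIM('a)"
  define \<omega> where "\<omega> = unit_ball_vol n"
  define B where "B = c0^n * a^(n+1) * (c1 - 1/c1)"
  have a1: "1 < a" and ac: "a \<le> c1" using a_gt1 a_le by (auto simp: a_def)
  have lpos: "0 < l" using lam_pos[OF a1] by (simp add: l_def)
  have \<omega>pos: "0 < \<omega>" by (simp add: \<omega>_def)
  have tau: "l \<le> \<tau>" "\<tau> < a * l" using assms(2) by (auto simp: w Sl_def l_def a_def)
  have taupos: "0 < \<tau>" using tau lpos by linarith
  have dz: "dist (x + l *\<^sub>R v) z < l * (c0/2)" using assms(1) by (simp add: w l_def a_def)
  have sub: "ball (x + l *\<^sub>R v) (l*(c0/2)) \<times> Sl a m \<subseteq> Whitney_region c0 c1 z \<tau>"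
  proof
    fix u assume u: "u \<in> ball (x + l *\<^sub>R v) (l*(c0/2)) \<times> Sl a m"
    obtain y t where ut: "u = (y,t)" by (cases u)
    have dy: "dist (x + l *\<^sub>R v) y < l*(c0/2)" and t: "l \<le> t" "t < a * l"
      using u by (auto simp: ut Sl_def l_def)
    have "dist z y \<le> dist z (x + l *\<^sub>R v) + dist (x + l *\<^sub>R v) y" by (rule dist_triangle)
    also have "\<dots> < l * c0" using dz dy by (simp add: dist_commute)
    also have "\<dots> \<le> c0 * \<tau>" using tau c0 by (simp add: mult.commute)
    finally have 1: "dist z y < c0 * \<tau>" .
    have "\<tau> < c1 * l" using tau ac lpos by (smt (verit) mult_right_mono)
    moreover have "c1 * l \<le> c1 * t" using t c1 by simp
    ultimately have "\<tau> < c1 * t" by linarith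
    then have 2: "\<tau> / c1 < t" using c1 by (simp add: divide_less_eq mult.commute)
    have "t < a * \<tau>" using t tau a1 by (smt (verit) mult_left_mono)
    also have "\<dots> \<le> c1 * \<tau>" using ac taupos by (intro mult_right_mono) auto
    finally have 3: "t < c1 * \<tau>" .
    show "u \<in> Whitney_region c0 c1 z \<tau>" using 1 2 3 by (simp add: ut Whitney_region_def)
  qed
  have intle: "(\<integral>\<^sup>+ u. indicator (ball (x + l *\<^sub>R v) (l*(c0/2)) \<times> Sl a m) u * ennreal (G u) \<partial>(lborel \<Otimes>\<^sub>M lborel))
      \<le> NN c0 c1 G w"
    unfolding NN_def w fst_conv snd_conv
    by (intro nn_integral_mono) (use sub in \<open>auto split: split_indicator\<close>)
  define d where "d = \<omega> * (c0*\<tau>)^n * (c1*\<tau> - \<tau>/c1)"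
  have DDe: "DD c0 c1 w = ennreal d" unfolding w d_def \<omega>_def n_def by (rule DD_eq[OF c0 c1 taupos])
  have "1 * 1 < c1 * c1" using c1 by (intro mult_strict_mono) auto
  then have cc: "0 < c1 - 1/c1" using c1 by (simp add: field_simps)
  have dfac: "d = \<omega> * c0^n * (c1 - 1/c1) * \<tau>^(n+1)" unfolding d_def by (simp add: power_mult_distrib field_simps)
  have dpos: "0 < d" unfolding dfac using \<omega>pos c0 cc taupos by simp
  have "\<tau>^(n+1) \<le> (a*l)^(n+1)" using tau taupos by (intro power_mono) auto
  then have "d \<le> \<omega> * c0^n * (c1 - 1/c1) * (a*l)^(n+1)" unfolding dfac
    using \<omega>pos c0 cc by (intro mult_left_mono) auto
  also have "\<dots> = B * (\<omega> * l^(n+1))" unfolding B_def by (simp add: power_mult_distrib)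
  finally have dle: "d \<le> B * (\<omega> * l^(n+1))" .
  have q: "1/(\<omega> * l^(n+1)) \<le> B / d"
    using dle dpos \<omega>pos lpos by (simp add: divide_simps)
  have "ennreal (1/(\<omega> * l^(n+1))) * (\<integral>\<^sup>+ u. indicator (ball (x + l *\<^sub>R v) (l*(c0/2)) \<times> Sl a m) u * ennreal (G u) \<partial>(lborel \<Otimes>\<^sub>M lborel))
      \<le> ennreal (B / d) * NN c0 c1 G w"
    using q intle by (intro mult_mono ennreal_leI) auto
  also have "\<dots> = ennreal B * (NN c0 c1 G w / DD c0 c1 w)"
  proof -
    have Bnn: "0 \<le> B" unfolding B_def using c0 cc a1 by simp
    have e1: "ennreal (B/d) = ennreal B * ennreal (1/d)"
      using Bnn dpos by (simp add: ennreal_mult[symmetric])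
    have e2: "NN c0 c1 G w / DD c0 c1 w = NN c0 c1 G w * ennreal (1/d)"
      unfolding DDe divide_ennreal_def using dpos by (simp add: inverse_ennreal divide_inverse)
    show ?thesis unfolding e1 e2 by (simp add: ac_simps)
  qed
  finally show ?thesis unfolding a_def l_def n_def \<omega>_def B_def .
qed

lemma inv_snd_meas[measurable]: "(\<lambda>x. ennreal (1 / snd x)) \<in> borel_measurable ((lborel::'b::euclidean_space measure) \<Otimes>\<^sub>M lborel)"
  by measurable

lemma stepE:
  fixes x v :: 'a and m :: nat
  assumes rr: "0 < rr"
  shows "epow (ennreal (1/(unit_ball_vol DIM('a) * lam (sqrt c1) m ^(DIM('a)+1))) *
      (\<integral>\<^sup>+ u. indicator (ball (x + lam (sqrt c1) m *\<^sub>R v) (lam (sqrt c1) m*(c0/2)) \<times> Sl (sqrt c1) m) u * ennreal (G u) \<partial>(lborel \<Otimes>\<^sub>M lborel))) rr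
    \<le> ennreal ((c0^DIM('a) * sqrt c1^(DIM('a)+1) * (c1 - 1/c1)) powr rr /
          (unit_ball_vol DIM('a) * (c0/2)^DIM('a) * (sqrt c1 - 1) / sqrt c1 * lam (sqrt c1) m ^ DIM('a))) *
       (\<integral>\<^sup>+ w. indicator (ball (x + lam (sqrt c1) m *\<^sub>R v) (lam (sqrt c1) m*(c0/2))) (fst w) *
           indicator (Sl (sqrt c1) m) (snd w) * HH c0 c1 rr G w * ennreal (1 / snd w) \<partial>(lborel \<Otimes>\<^sub>M lborel))"
proof -
  define a where "a = sqrt c1"
  define l where "l = lam a m"
  define n where "n = DIM('a)"
  define \<omega> where "\<omega> = unit_ball_vol n"
  define B where "B = c0^n * a^(n+1) * (c1 - 1/c1)"
  define Kd where "Kd = \<omega> * (c0/2)^n * (a - 1) / a"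
  define box where "box = ball (x + l *\<^sub>R v) (l*(c0/2)) \<times> Sl a m"
  define R where "R = ennreal (1/(\<omega> * l^(n+1))) * (\<integral>\<^sup>+ u. indicator box u * ennreal (G u) \<partial>(lborel \<Otimes>\<^sub>M lborel))"
  define c where "c = epow R rr"
  have a1: "1 < a" and ac: "a \<le> c1" using a_gt1 a_le by (auto simp: a_def)
  have lpos: "0 < l" using lam_pos[OF a1] by (simp add: l_def)
  have \<omega>pos: "0 < \<omega>" by (simp add: \<omega>_def)
  have "1 * 1 < c1 * c1" using c1 by (intro mult_strict_mono) auto
  then have cc: "0 < c1 - 1/c1" using c1 by (simp add: field_simps)
  have Bnn: "0 \<le> B" unfolding B_def using c0 cc a1 by simp
  have Kdpos: "0 < Kd" unfolding Kd_def using \<omega>pos c0 a1 by simp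
  have boxs[measurable]: "box \<in> sets (lborel \<Otimes>\<^sub>M lborel)" unfolding box_def Sl_def by (intro pair_measureI) auto
  have ptw: "c \<le> ennreal (B powr rr) * HH c0 c1 rr G w" if "w \<in> box" for w
  proof -
    have w1: "dist (x + l *\<^sub>R v) (fst w) < l * (c0/2)" and w2: "snd w \<in> Sl a m"
      using that by (auto simp: box_def mem_Times_iff)
    have "R \<le> ennreal B * (NN c0 c1 G w / DD c0 c1 w)"
      using stepD[of x m v w] w1 w2 unfolding R_def box_def a_def l_def n_def \<omega>_def B_def by simp
    then have "c \<le> epow (ennreal B * (NN c0 c1 G w / DD c0 c1 w)) rr"
      unfolding c_def using rr by (intro epow_mono) auto
    also have "\<dots> = ennreal (B powr rr) * HH c0 c1 rr G w"
      unfolding HH_def using Bnn rr by (rule epow_mult)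
    finally show ?thesis .
  qed
  have emb: "emeasure (lborel \<Otimes>\<^sub>M lborel) box = ennreal (\<omega> * (l*(c0/2))^n) * ennreal (a*l - l)"
  proof -
    have "l \<le> a * l" using a1 lpos by simp
    then show ?thesis
      unfolding box_def Sl_def l_def using lpos c0
      by (simp add: lborel.emeasure_pair_measure_Times emeasure_ball \<omega>_def n_def l_def)
  qed
  have lower: "ennreal (Kd * l^n) \<le> (\<integral>\<^sup>+ w. indicator box w * ennreal (1 / snd w) \<partial>(lborel \<Otimes>\<^sub>M lborel))"
  proof -
    have "ennreal (Kd * l^n) = ennreal (1/(a*l)) * emeasure (lborel \<Otimes>\<^sub>M lborel) box"
    proof -
      have "Kd * l^n = 1/(a*l) * ((\<omega> * (l*(c0/2))^n) * (a*l - l))"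
        unfolding Kd_def using a1 lpos by (simp add: power_mult_distrib field_simps)
      moreover have "0 \<le> \<omega> * (l*(c0/2))^n" using \<omega>pos lpos c0 by simp
      moreover have "0 \<le> a*l - l" using a1 lpos by simp
      moreover have "0 \<le> 1/(a*l)" using a1 lpos by simp
      ultimately show ?thesis unfolding emb
        by (metis ennreal_mult mult_nonneg_nonneg)
    qed
    also have "\<dots> = (\<integral>\<^sup>+ w. ennreal (1/(a*l)) * indicator box w \<partial>(lborel \<Otimes>\<^sub>M lborel))"
      by (rule nn_integral_cmult_indicator[OF boxs, symmetric])
    also have "\<dots> \<le> (\<integral>\<^sup>+ w. indicator box w * ennreal (1 / snd w) \<partial>(lborel \<Otimes>\<^sub>M lborel))"
    proof (intro nn_integral_mono)
      fix w :: "'a \<times> real"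
      show "ennreal (1/(a*l)) * indicator box w \<le> indicator box w * ennreal (1 / snd w)"
      proof (cases "w \<in> box")
        case True
        then have "l \<le> snd w" "snd w < a * l" by (auto simp: box_def Sl_def l_def mem_Times_iff)
        then have "1/(a*l) \<le> 1 / snd w" using lpos a1 by (intro divide_left_mono) auto
        then show ?thesis using True by (simp add: ennreal_leI)
      qed simp
    qed
    finally show ?thesis .
  qed
  have "c * ennreal (Kd * l^n) \<le> c * (\<integral>\<^sup>+ w. indicator box w * ennreal (1 / snd w) \<partial>(lborel \<Otimes>\<^sub>M lborel))"
    using lower by (rule mult_left_mono) simp
  also have "\<dots> = (\<integral>\<^sup>+ w. c * (indicator box w * ennreal (1 / snd w)) \<partial>(lborel \<Otimes>\<^sub>M lborel))"
    using boxs by (intro nn_integral_cmult[symmetric]) measurable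
  also have "\<dots> \<le> (\<integral>\<^sup>+ w. ennreal (B powr rr) * (indicator box w * HH c0 c1 rr G w * ennreal (1 / snd w)) \<partial>(lborel \<Otimes>\<^sub>M lborel))"
  proof (intro nn_integral_mono)
    fix w :: "'a \<times> real"
    show "c * (indicator box w * ennreal (1 / snd w)) \<le> ennreal (B powr rr) * (indicator box w * HH c0 c1 rr G w * ennreal (1 / snd w))"
    proof (cases "w \<in> box")
      case True
      have "c * ennreal (1 / snd w) \<le> (ennreal (B powr rr) * HH c0 c1 rr G w) * ennreal (1 / snd w)"
        using ptw[OF True] by (rule mult_right_mono) simp
      then show ?thesis using True by (simp add: ac_simps)
    qed simp
  qed
  also have "\<dots> = ennreal (B powr rr) * (\<integral>\<^sup>+ w. indicator box w * HH c0 c1 rr G w * ennreal (1 / snd w) \<partial>(lborel \<Otimes>\<^sub>M lborel))"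
    using boxs by (intro nn_integral_cmult) measurable
  finally have main: "c * ennreal (Kd * l^n) \<le> ennreal (B powr rr) * (\<integral>\<^sup>+ w. indicator box w * HH c0 c1 rr G w * ennreal (1 / snd w) \<partial>(lborel \<Otimes>\<^sub>M lborel))" .
  have kl: "0 < Kd * l^n" using Kdpos lpos by simp
  have one: "ennreal (Kd * l^n) * ennreal (1 / (Kd * l^n)) = 1"
  proof -
    have gen: "\<And>y::real. 0 < y \<Longrightarrow> y * (1/y) = 1" by simp
    have k1: "(Kd * l^n) * (1/(Kd*l^n)) = 1" using gen[OF kl] .
    have "ennreal (Kd*l^n) * ennreal (1/(Kd*l^n)) = ennreal ((Kd * l^n) * (1/(Kd*l^n)))"
      using kl by (intro ennreal_mult[symmetric]) auto
    then show ?thesis using k1 by simp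
  qed
  have "c = c * ennreal (Kd * l^n) * ennreal (1 / (Kd * l^n))"
    by (simp only: mult.assoc one) simp
  also have "\<dots> \<le> ennreal (B powr rr) * (\<integral>\<^sup>+ w. indicator box w * HH c0 c1 rr G w * ennreal (1 / snd w) \<partial>(lborel \<Otimes>\<^sub>M lborel)) * ennreal (1 / (Kd * l^n))"
    using main by (rule mult_right_mono) simp
  also have "\<dots> = ennreal (B powr rr / (Kd * l^n)) * (\<integral>\<^sup>+ w. indicator box w * HH c0 c1 rr G w * ennreal (1 / snd w) \<partial>(lborel \<Otimes>\<^sub>M lborel))"
  proof -
    have "ennreal (B powr rr / (Kd * l^n)) = ennreal (B powr rr * (1 / (Kd * l^n)))" by simp
    also have "\<dots> = ennreal (B powr rr) * ennreal (1 / (Kd * l^n))"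
      using kl by (intro ennreal_mult) auto
    finally show ?thesis by (simp only: ac_simps)
  qed
  finally have fin: "c \<le> ennreal (B powr rr / (Kd * l^n)) * (\<integral>\<^sup>+ w. indicator box w * HH c0 c1 rr G w * ennreal (1 / snd w) \<partial>(lborel \<Otimes>\<^sub>M lborel))" .
  have ib: "indicator box w = indicator (ball (x + l *\<^sub>R v) (l*(c0/2))) (fst w) * (indicator (Sl a m) (snd w) :: ennreal)" for w
    unfolding box_def by (simp add: indicator_times)
  have eqJ: "(\<integral>\<^sup>+ w. indicator box w * HH c0 c1 rr G w * ennreal (1 / snd w) \<partial>(lborel \<Otimes>\<^sub>M lborel)) =
     (\<integral>\<^sup>+ w. indicator (ball (x + l *\<^sub>R v) (l*(c0/2))) (fst w) * indicator (Sl a m) (snd w) * HH c0 c1 rr G w * ennreal (1 / snd w) \<partial>(lborel \<Otimes>\<^sub>M lborel))"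
    by (simp add: ib)
  show ?thesis using fin unfolding eqJ unfolding c_def R_def box_def a_def l_def n_def \<omega>_def B_def Kd_def .
qed

end


context
  fixes c0 c1 r :: real and G :: "'a::euclidean_space \<times> real \<Rightarrow> real" and P :: "'a set"
  assumes c0: "0 < c0" and c1: "1 < c1" and r: "0 < r" "r \<le> 1"
    and Gm[measurable]: "G \<in> borel_measurable (lborel \<Otimes>\<^sub>M lborel)" and G0: "\<And>w. 0 \<le> G w"
    and Pfin: "finite P" and Pcov: "cball 0 (sqrt c1) \<subseteq> (\<Union>v\<in>P. ball v (c0/2))"
begin

lemma a1': "1 < sqrt c1" using c1 by simp

lemma step1:
  fixes x :: 'a
  shows "(\<integral>\<^sup>+ w. indicator (cone x) w * ennreal (G w / Vol (fst w) (snd w) / snd w) \<partial>(lborel \<Otimes>\<^sub>M lborel))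
    \<le> (\<Sum>m. ennreal (1/(unit_ball_vol DIM('a) * lam (sqrt c1) m ^(DIM('a)+1))) *
         (\<integral>\<^sup>+ u. indicator (ball x (sqrt c1 * lam (sqrt c1) m) \<times> Sl (sqrt c1) m) u * ennreal (G u) \<partial>(lborel \<Otimes>\<^sub>M lborel)))"
proof -
  define a where "a = sqrt c1"
  define n where "n = DIM('a)"
  define \<omega> where "\<omega> = unit_ball_vol n"
  have a1: "1 < a" unfolding a_def using a1' .
  have \<omega>pos: "0 < \<omega>" by (simp add: \<omega>_def)
  define g where "g m u = ennreal (1/(\<omega> * lam a m ^(n+1))) * (indicator (ball x (a * lam a m) \<times> Sl a m) u * ennreal (G u))" for m u
  have gm[measurable]: "g m \<in> borel_measurable (lborel \<Otimes>\<^sub>M lborel)" for m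
  proof -
    have [measurable]: "ball x (a * lam a m) \<times> Sl a m \<in> sets (lborel \<Otimes>\<^sub>M lborel)"
      unfolding Sl_def by (intro pair_measureI) auto
    show ?thesis unfolding g_def by measurable
  qed
  have "(\<integral>\<^sup>+ w. indicator (cone x) w * ennreal (G w / Vol (fst w) (snd w) / snd w) \<partial>(lborel \<Otimes>\<^sub>M lborel))
     \<le> (\<integral>\<^sup>+ w. (\<Sum>m. g m w) \<partial>(lborel \<Otimes>\<^sub>M lborel))"
  proof (intro nn_integral_mono)
    fix w :: "'a \<times> real"
    obtain y t where w: "w = (y, t)" by (cases w)
    show "indicator (cone x) w * ennreal (G w / Vol (fst w) (snd w) / snd w) \<le> (\<Sum>m. g m w)"
    proof (cases "w \<in> cone x")
      case False then show ?thesis by simp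
    next
      case True
      then have dt: "dist x y < t" by (simp add: w cone_def)
      then have tpos: "0 < t" using zero_le_dist[of x y] by linarith
      obtain m where m: "t \<in> Sl a m" using Sl_exists[OF a1 tpos] by blast
      define l where "l = lam a m"
      have lpos: "0 < l" using lam_pos[OF a1] by (simp add: l_def)
      have lt: "l \<le> t" "t < a * l" using m by (auto simp: Sl_def l_def)
      have inb: "w \<in> ball x (a * l) \<times> Sl a m" using dt lt m by (simp add: w)
      have V: "Vol y t = \<omega> * t^n" using tpos by (simp add: Vol_eq \<omega>_def n_def)
      have "G w / Vol y t / t = G w / (\<omega> * t^(n+1))" unfolding V by (simp add: field_simps)
      also have "\<dots> \<le> G w / (\<omega> * l^(n+1))"
        using G0[of w] \<omega>pos lpos lt by (intro divide_left_mono mult_left_mono power_mono mult_pos_pos) auto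
      also have "\<dots> = 1/(\<omega> * l^(n+1)) * G w" by simp
      finally have le: "G w / Vol y t / t \<le> 1/(\<omega> * l^(n+1)) * G w" .
      have "indicator (cone x) w * ennreal (G w / Vol (fst w) (snd w) / snd w) = ennreal (G w / Vol y t / t)"
        using True by (simp add: w)
      also have "\<dots> \<le> ennreal (1/(\<omega> * l^(n+1)) * G w)" using le by (rule ennreal_leI)
      also have "\<dots> = ennreal (1/(\<omega> * l^(n+1))) * ennreal (G w)"
        using \<omega>pos lpos G0[of w] by (intro ennreal_mult) auto
      also have "\<dots> = g m w"
        using inb unfolding g_def l_def by simp
      also have "\<dots> \<le> (\<Sum>m. g m w)" by (rule ennreal_term_le_suminf)
      finally show ?thesis .
    qed
  qed
  also have "\<dots> = (\<Sum>m. integral\<^sup>N (lborel \<Otimes>\<^sub>M lborel) (g m))"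
    by (rule nn_integral_suminf) measurable
  also have "\<dots> = (\<Sum>m. ennreal (1/(\<omega> * lam a m ^(n+1))) *
         (\<integral>\<^sup>+ u. indicator (ball x (a * lam a m) \<times> Sl a m) u * ennreal (G u) \<partial>(lborel \<Otimes>\<^sub>M lborel)))"
  proof (intro suminf_cong)
    fix m
    have [measurable]: "ball x (a * lam a m) \<times> Sl a m \<in> sets (lborel \<Otimes>\<^sub>M lborel)"
      unfolding Sl_def by (intro pair_measureI) auto
    show "integral\<^sup>N (lborel \<Otimes>\<^sub>M lborel) (g m) = ennreal (1/(\<omega> * lam a m ^(n+1))) *
         (\<integral>\<^sup>+ u. indicator (ball x (a * lam a m) \<times> Sl a m) u * ennreal (G u) \<partial>(lborel \<Otimes>\<^sub>M lborel))"
      unfolding g_def by (rule nn_integral_cmult) measurable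
  qed
  finally show ?thesis unfolding a_def n_def \<omega>_def .
qed

lemma cover_pt:
  fixes x y :: 'a and l :: real
  assumes "0 < l" "dist x y < sqrt c1 * l"
  shows "\<exists>v\<in>P. dist (x + l *\<^sub>R v) y < l * (c0/2)"
proof -
  define z where "z = (1/l) *\<^sub>R (y - x)"
  have lz: "l *\<^sub>R z = y - x" using assms(1) by (simp add: z_def)
  have "norm z = norm (y - x) / l" using assms(1) by (simp add: z_def)
  also have "norm (y - x) = dist x y" by (simp add: dist_norm norm_minus_commute)
  finally have nz: "norm z = dist x y / l" .
  have "dist x y / l < sqrt c1" using assms by (simp add: divide_less_eq mult.commute)
  then have "z \<in> cball 0 (sqrt c1)" using nz by simp
  then have "z \<in> (\<Union>v\<in>P. ball v (c0/2))" using Pcov by (rule rev_subsetD)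
  then obtain v where v: "v \<in> P" "z \<in> ball v (c0/2)" by (rule UN_E)
  then have v: "v \<in> P" "dist v z < c0/2" by auto
  have e: "x + l *\<^sub>R v - y = l *\<^sub>R (v - z)" unfolding scaleR_right_diff_distrib lz by (simp add: algebra_simps)
  have "dist (x + l *\<^sub>R v) y = l * dist v z" unfolding dist_norm e using assms(1) by simp
  also have "\<dots> < l * (c0/2)" using v(2) assms(1) by (rule mult_strict_left_mono)
  finally have dd: "dist (x + l *\<^sub>R v) y < l * (c0/2)" .
  show ?thesis using dd v(1) by auto
qed

lemma step2:
  fixes x :: 'a and m :: nat
  shows "ennreal (1/(unit_ball_vol DIM('a) * lam (sqrt c1) m ^(DIM('a)+1))) *
         (\<integral>\<^sup>+ u. indicator (ball x (sqrt c1 * lam (sqrt c1) m) \<times> Sl (sqrt c1) m) u * ennreal (G u) \<partial>(lborel \<Otimes>\<^sub>M lborel))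
    \<le> (\<Sum>v\<in>P. ennreal (1/(unit_ball_vol DIM('a) * lam (sqrt c1) m ^(DIM('a)+1))) *
      (\<integral>\<^sup>+ u. indicator (ball (x + lam (sqrt c1) m *\<^sub>R v) (lam (sqrt c1) m*(c0/2)) \<times> Sl (sqrt c1) m) u * ennreal (G u) \<partial>(lborel \<Otimes>\<^sub>M lborel)))"
proof -
  define l where "l = lam (sqrt c1) m"
  have lpos: "0 < l" using lam_pos[OF a1'] by (simp add: l_def)
  have sets1: "ball x (sqrt c1 * l) \<times> Sl (sqrt c1) m \<in> sets (lborel \<Otimes>\<^sub>M lborel)"
    unfolding Sl_def by (intro pair_measureI) auto
  have sets2[measurable]: "ball (x + l *\<^sub>R v) (l*(c0/2)) \<times> Sl (sqrt c1) m \<in> sets (lborel \<Otimes>\<^sub>M lborel)" for v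
    unfolding Sl_def by (intro pair_measureI) auto
  have "(\<integral>\<^sup>+ u. indicator (ball x (sqrt c1 * l) \<times> Sl (sqrt c1) m) u * ennreal (G u) \<partial>(lborel \<Otimes>\<^sub>M lborel))
     \<le> (\<integral>\<^sup>+ u. (\<Sum>v\<in>P. indicator (ball (x + l *\<^sub>R v) (l*(c0/2)) \<times> Sl (sqrt c1) m) u * ennreal (G u)) \<partial>(lborel \<Otimes>\<^sub>M lborel))"
  proof (intro nn_integral_mono)
    fix u :: "'a \<times> real"
    show "indicator (ball x (sqrt c1 * l) \<times> Sl (sqrt c1) m) u * ennreal (G u)
       \<le> (\<Sum>v\<in>P. indicator (ball (x + l *\<^sub>R v) (l*(c0/2)) \<times> Sl (sqrt c1) m) u * ennreal (G u))"
    proof (cases "u \<in> ball x (sqrt c1 * l) \<times> Sl (sqrt c1) m")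
      case False then show ?thesis by simp
    next
      case True
      then have d: "dist x (fst u) < sqrt c1 * l" and t: "snd u \<in> Sl (sqrt c1) m" by (auto simp: mem_Times_iff)
      obtain v where v: "v \<in> P" "dist (x + l *\<^sub>R v) (fst u) < l * (c0/2)" using cover_pt[OF lpos d] by blast
      have "indicator (ball x (sqrt c1 * l) \<times> Sl (sqrt c1) m) u * ennreal (G u)
          = indicator (ball (x + l *\<^sub>R v) (l*(c0/2)) \<times> Sl (sqrt c1) m) u * ennreal (G u)"
      proof -
        have "u \<in> ball (x + l *\<^sub>R v) (l*(c0/2)) \<times> Sl (sqrt c1) m" using v(2) t by (simp add: mem_Times_iff)
        then show ?thesis using True by simp
      qed
      also have "\<dots> \<le> (\<Sum>v\<in>P. indicator (ball (x + l *\<^sub>R v) (l*(c0/2)) \<times> Sl (sqrt c1) m) u * ennreal (G u))"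
        by (rule member_le_sum[OF v(1) _ Pfin]) simp
      finally show ?thesis .
    qed
  qed
  also have "\<dots> = (\<Sum>v\<in>P. (\<integral>\<^sup>+ u. indicator (ball (x + l *\<^sub>R v) (l*(c0/2)) \<times> Sl (sqrt c1) m) u * ennreal (G u) \<partial>(lborel \<Otimes>\<^sub>M lborel)))"
    by (rule nn_integral_sum) measurable
  finally have le: "(\<integral>\<^sup>+ u. indicator (ball x (sqrt c1 * l) \<times> Sl (sqrt c1) m) u * ennreal (G u) \<partial>(lborel \<Otimes>\<^sub>M lborel))
     \<le> (\<Sum>v\<in>P. (\<integral>\<^sup>+ u. indicator (ball (x + l *\<^sub>R v) (l*(c0/2)) \<times> Sl (sqrt c1) m) u * ennreal (G u) \<partial>(lborel \<Otimes>\<^sub>M lborel)))" .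
  show ?thesis
    unfolding l_def[symmetric] sum_distrib_left[symmetric]
    using le by (rule mult_left_mono) simp
qed

end


lemma Sl_borel[measurable]: "Sl a m \<in> sets borel" by (simp add: Sl_def)

context
  fixes c0 c1 r :: real and G :: "'a::euclidean_space \<times> real \<Rightarrow> real" and P :: "'a set"
  assumes c0: "0 < c0" and c1: "1 < c1" and r: "0 < r" "r \<le> 1"
    and Gm[measurable]: "G \<in> borel_measurable (lborel \<Otimes>\<^sub>M lborel)" and G0: "\<And>w. 0 \<le> G w"
    and Pfin: "finite P" and Pcov: "cball 0 (sqrt c1) \<subseteq> (\<Union>v\<in>P. ball v (c0/2))"
begin

lemma main_ineq:
  "(\<integral>\<^sup>+ x. epow (\<integral>\<^sup>+ w. indicator (cone x) w * ennreal (G w / Vol (fst w) (snd w) / snd w) \<partial>(lborel \<Otimes>\<^sub>M lborel)) r \<partial>lborel)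
   \<le> ennreal (real (card P) * ((c0^DIM('a) * sqrt c1^(DIM('a)+1) * (c1 - 1/c1)) powr r /
          (unit_ball_vol DIM('a) * (c0/2)^DIM('a) * (sqrt c1 - 1) / sqrt c1) * (unit_ball_vol DIM('a) * (c0/2)^DIM('a)))) *
     (\<integral>\<^sup>+ w. indicator {w. 0 < snd w} w * HH c0 c1 r G w * ennreal (1 / snd w) \<partial>(lborel \<Otimes>\<^sub>M lborel))"
proof -
  define a where "a = sqrt c1"
  define n where "n = DIM('a)"
  define \<omega> where "\<omega> = unit_ball_vol n"
  define Bp where "Bp = (c0^n * a^(n+1) * (c1 - 1/c1)) powr r"
  define Kd where "Kd = \<omega> * (c0/2)^n * (a - 1) / a"
  define K0 where "K0 = Bp / Kd * (\<omega> * (c0/2)^n)"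
  define l where "l m = lam a m" for m
  define Fm where "Fm m w = indicator (Sl a m) (snd w) * HH c0 c1 r G w * ennreal (1 / snd w)" for m w
  define T where "T m v x = ennreal (Bp / (Kd * l m ^ n)) *
      (\<integral>\<^sup>+ w. indicator (ball (x + l m *\<^sub>R v) (l m * (c0/2))) (fst w) * Fm m w \<partial>(lborel \<Otimes>\<^sub>M lborel))" for m v x
  define II where "II x = (\<integral>\<^sup>+ w. indicator (cone x) w * ennreal (G w / Vol (fst w) (snd w) / snd w) \<partial>(lborel \<Otimes>\<^sub>M lborel))" for x
  define Q where "Q m x = ennreal (1/(\<omega> * l m ^(n+1))) *
         (\<integral>\<^sup>+ u. indicator (ball x (a * l m) \<times> Sl a m) u * ennreal (G u) \<partial>(lborel \<Otimes>\<^sub>M lborel))" for m x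
  define R where "R m v x = ennreal (1/(\<omega> * l m ^(n+1))) *
      (\<integral>\<^sup>+ u. indicator (ball (x + l m *\<^sub>R v) (l m*(c0/2)) \<times> Sl a m) u * ennreal (G u) \<partial>(lborel \<Otimes>\<^sub>M lborel))" for m v x
  have a1: "1 < a" using c1 by (simp add: a_def)
  have \<omega>pos: "0 < \<omega>" by (simp add: \<omega>_def)
  have lpos: "0 < l m" for m using lam_pos[OF a1] by (simp add: l_def)
  have Kdpos: "0 < Kd" unfolding Kd_def using \<omega>pos c0 a1 by simp
  have Bpnn: "0 \<le> Bp" unfolding Bp_def by simp
  have HHm[measurable]: "HH c0 c1 r G \<in> borel_measurable (lborel \<Otimes>\<^sub>M lborel)" by (rule HH_measurable[OF Gm])
  have Fmm[measurable]: "Fm m \<in> borel_measurable (lborel \<Otimes>\<^sub>M lborel)" for m unfolding Fm_def[abs_def] by measurable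
  have Tm[measurable]: "T m v \<in> borel_measurable lborel" for m v
    unfolding T_def[abs_def] using xint_meas[OF Fmm] by measurable
  note s1 = step1[OF c0 c1 r Gm G0 Pfin Pcov]
  note s2 = step2[OF c0 c1 r Gm G0 Pfin Pcov]
  note sE = stepE[OF c0 c1 r Gm G0 Pfin Pcov r(1)]
  have pt: "epow (II x) r \<le> (\<Sum>m. \<Sum>v\<in>P. T m v x)" for x
  proof -
    have "epow (II x) r \<le> epow (\<Sum>m. Q m x) r"
      using s1[of x] r unfolding II_def Q_def l_def a_def n_def \<omega>_def by (intro epow_mono) auto
    also have "\<dots> \<le> (\<Sum>m. epow (Q m x) r)" by (rule epow_suminf_subadd[OF r])
    also have "\<dots> \<le> (\<Sum>m. \<Sum>v\<in>P. T m v x)"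
    proof (intro suminf_le summableI)
      fix m
      have "epow (Q m x) r \<le> epow (\<Sum>v\<in>P. R m v x) r"
        using s2[of m x] r unfolding Q_def R_def l_def a_def n_def \<omega>_def by (intro epow_mono) auto
      also have "\<dots> \<le> (\<Sum>v\<in>P. epow (R m v x) r)" by (rule epow_sum_subadd[OF r])
      also have "\<dots> \<le> (\<Sum>v\<in>P. T m v x)"
      proof (intro sum_mono)
        fix v
        have "epow (R m v x) r \<le> ennreal (Bp / (Kd * l m ^ n)) *
          (\<integral>\<^sup>+ w. indicator (ball (x + l m *\<^sub>R v) (l m * (c0/2))) (fst w) *
           indicator (Sl a m) (snd w) * HH c0 c1 r G w * ennreal (1 / snd w) \<partial>(lborel \<Otimes>\<^sub>M lborel))"
          using sE[of m x v] unfolding R_def l_def a_def n_def \<omega>_def Bp_def Kd_def .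
        also have "\<dots> = T m v x" unfolding T_def Fm_def by (simp add: mult.assoc)
        finally show "epow (R m v x) r \<le> T m v x" .
      qed
      finally show "epow (Q m x) r \<le> (\<Sum>v\<in>P. T m v x)" .
    qed
    finally show ?thesis .
  qed
  have Tint: "(\<integral>\<^sup>+ x. T m v x \<partial>lborel) = ennreal K0 * (\<integral>\<^sup>+ w. Fm m w \<partial>(lborel \<Otimes>\<^sub>M lborel))" for m v
  proof -
    have "(\<integral>\<^sup>+ x. T m v x \<partial>lborel) = ennreal (Bp / (Kd * l m ^ n)) * ennreal (\<omega> * (l m * (c0/2))^n) * (\<integral>\<^sup>+ w. Fm m w \<partial>(lborel \<Otimes>\<^sub>M lborel))"
      unfolding T_def using xint[OF Fmm, of "l m * (c0/2)" "Bp / (Kd * l m ^ n)" "l m *\<^sub>R v"] lpos[of m] c0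
      by (simp add: \<omega>_def n_def)
    also have "ennreal (Bp / (Kd * l m ^ n)) * ennreal (\<omega> * (l m * (c0/2))^n) = ennreal K0"
    proof -
      have "Bp / (Kd * l m ^ n) * (\<omega> * (l m * (c0/2))^n) = K0"
        unfolding K0_def using lpos[of m] Kdpos by (simp add: power_mult_distrib field_simps)
      moreover have "0 \<le> Bp / (Kd * l m ^ n)" using Bpnn Kdpos lpos[of m] by simp
      moreover have "0 \<le> \<omega> * (l m * (c0/2))^n" using \<omega>pos lpos[of m] c0 by simp
      ultimately show ?thesis by (metis ennreal_mult)
    qed
    finally show ?thesis .
  qed
  have "(\<integral>\<^sup>+ x. epow (II x) r \<partial>lborel) \<le> (\<integral>\<^sup>+ x. (\<Sum>m. \<Sum>v\<in>P. T m v x) \<partial>lborel)"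
    by (intro nn_integral_mono pt)
  also have "\<dots> = (\<Sum>m. (\<integral>\<^sup>+ x. (\<Sum>v\<in>P. T m v x) \<partial>lborel))"
    by (rule nn_integral_suminf) measurable
  also have "\<dots> = (\<Sum>m. (\<Sum>v\<in>P. \<integral>\<^sup>+ x. T m v x \<partial>lborel))"
    by (intro suminf_cong nn_integral_sum) measurable
  also have "\<dots> = (\<Sum>m. ennreal (real (card P) * K0) * (\<integral>\<^sup>+ w. Fm m w \<partial>(lborel \<Otimes>\<^sub>M lborel)))"
  proof (intro suminf_cong)
    fix m
    have "(\<Sum>v\<in>P. \<integral>\<^sup>+ x. T m v x \<partial>lborel) = of_nat (card P) * (ennreal K0 * (\<integral>\<^sup>+ w. Fm m w \<partial>(lborel \<Otimes>\<^sub>M lborel)))"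
      by (simp add: Tint)
    also have "\<dots> = ennreal (real (card P) * K0) * (\<integral>\<^sup>+ w. Fm m w \<partial>(lborel \<Otimes>\<^sub>M lborel))"
    proof -
      have K0nn: "0 \<le> K0" unfolding K0_def using Bpnn Kdpos \<omega>pos c0 by simp
      have "ennreal (real (card P) * K0) = ennreal (real (card P)) * ennreal K0"
        using K0nn by (intro ennreal_mult) auto
      then show ?thesis by (simp add: ennreal_of_nat_eq_real_of_nat mult.assoc)
    qed
    finally show "(\<Sum>v\<in>P. \<integral>\<^sup>+ x. T m v x \<partial>lborel) = ennreal (real (card P) * K0) * (\<integral>\<^sup>+ w. Fm m w \<partial>(lborel \<Otimes>\<^sub>M lborel))" .
  qed
  also have "\<dots> = ennreal (real (card P) * K0) * (\<Sum>m. (\<integral>\<^sup>+ w. Fm m w \<partial>(lborel \<Otimes>\<^sub>M lborel)))"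
    by (rule ennreal_suminf_cmult)
  also have "(\<Sum>m. (\<integral>\<^sup>+ w. Fm m w \<partial>(lborel \<Otimes>\<^sub>M lborel))) = (\<integral>\<^sup>+ w. (\<Sum>m. Fm m w) \<partial>(lborel \<Otimes>\<^sub>M lborel))"
    by (rule nn_integral_suminf[symmetric]) measurable
  also have "\<dots> = (\<integral>\<^sup>+ w. indicator {w. 0 < snd w} w * HH c0 c1 r G w * ennreal (1 / snd w) \<partial>(lborel \<Otimes>\<^sub>M lborel))"
  proof (intro nn_integral_cong)
    fix w :: "'a \<times> real"
    have "(\<Sum>m. Fm m w) = (\<Sum>m. indicator (Sl a m) (snd w)) * (HH c0 c1 r G w * ennreal (1 / snd w))"
      unfolding Fm_def by (simp add: mult.assoc)
    also have "\<dots> = indicator {0<..} (snd w) * (HH c0 c1 r G w * ennreal (1 / snd w))"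
      by (simp add: suminf_indicator_Sl[OF a1])
    also have "\<dots> = indicator {w. 0 < snd w} w * HH c0 c1 r G w * ennreal (1 / snd w)"
      by (simp add: indicator_def mult.assoc)
    finally show "(\<Sum>m. Fm m w) = indicator {w. 0 < snd w} w * HH c0 c1 r G w * ennreal (1 / snd w)" .
  qed
  finally show ?thesis unfolding II_def K0_def Bp_def Kd_def a_def n_def \<omega>_def .
qed

end


lemma cover_exists:
  fixes R \<delta> :: real assumes "0 < \<delta>"
  obtains P :: "'a::euclidean_space set" where "finite P" "cball 0 R \<subseteq> (\<Union>v\<in>P. ball v \<delta>)"
proof -
  have "cball (0::'a) R \<subseteq> (\<Union>v\<in>cball 0 R. ball v \<delta>)" using assms by auto
  then obtain P where "P \<subseteq> cball 0 R" "finite P" "cball (0::'a) R \<subseteq> (\<Union>v\<in>P. ball v \<delta>)"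
    using compactE_image[OF compact_cball[of "0::'a" R], where f="\<lambda>v. ball v \<delta>" and C="cball 0 R"] by blast
  then show ?thesis using that by blast
qed

lemma Vol_meas[measurable]: "(\<lambda>w. Vol (fst w) (snd w)) \<in> borel_measurable ((lborel::'a::euclidean_space measure) \<Otimes>\<^sub>M lborel)"
  unfolding Vol_eq by measurable

theorem mainTheorem17:
  fixes p q s c0 c1 :: real
  assumes "0 < q" and "0 < p" and "p \<le> q" and "0 < c0" and "1 < c1"
  shows "\<exists>C::real. 0 \<le> C \<and>
    (\<forall>f :: 'a::euclidean_space \<times> real \<Rightarrow> real. f \<in> borel_measurable (lborel \<Otimes>\<^sub>M lborel) \<longrightarrow>
        T_norm p q s f \<le> ennreal C * Z_norm p q s c0 c1 f)"
proof -
  obtain P :: "'a set" where Pfin: "finite P" and Pcov: "cball 0 (sqrt c1) \<subseteq> (\<Union>v\<in>P. ball v (c0/2))"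
    using cover_exists[of "c0/2" "sqrt c1"] assms(4) by auto
  define r where "r = p / q"
  have r: "0 < r" "r \<le> 1" using assms by (auto simp: r_def)
  define K where "K = real (card P) * ((c0^DIM('a) * sqrt c1^(DIM('a)+1) * (c1 - 1/c1)) powr r /
          (unit_ball_vol DIM('a) * (c0/2)^DIM('a) * (sqrt c1 - 1) / sqrt c1) * (unit_ball_vol DIM('a) * (c0/2)^DIM('a)))"
  have Knn: "0 \<le> K" unfolding K_def using assms(4,5) by simp
  show ?thesis
  proof (intro exI[of _ "K powr (1/p)"] conjI allI impI)
    show "0 \<le> K powr (1/p)" by simp
    fix f :: "'a \<times> real \<Rightarrow> real"
    assume fm[measurable]: "f \<in> borel_measurable (lborel \<Otimes>\<^sub>M lborel)"
    define g where "g = Vpow (-s) f"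
    define G where "G w = \<bar>g w\<bar> powr q" for w
    have gm[measurable]: "g \<in> borel_measurable (lborel \<Otimes>\<^sub>M lborel)"
      unfolding g_def Vpow_def case_prod_beta' by measurable
    have Gm[measurable]: "G \<in> borel_measurable (lborel \<Otimes>\<^sub>M lborel)" unfolding G_def[abs_def] by measurable
    have G0: "\<And>w. 0 \<le> G w" by (simp add: G_def)
    note MI = main_ineq[OF assms(4,5) r Gm G0 Pfin Pcov]
    define II where "II x = (\<integral>\<^sup>+ w. indicator (cone x) w * ennreal (G w / Vol (fst w) (snd w) / snd w) \<partial>(lborel \<Otimes>\<^sub>M lborel))" for x
    define Zi where "Zi = (\<integral>\<^sup>+ w. indicator {w. 0 < snd w} w * HH c0 c1 r G w * ennreal (1 / snd w) \<partial>(lborel \<Otimes>\<^sub>M lborel))"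
    have TA: "epow (Aq q g x) p = epow (II x) r" for x
    proof -
      have "Aq q g x = epow (II x) (1/q)"
        unfolding Aq_def II_def G_def case_prod_beta' by simp
      then show ?thesis using assms(1) by (simp add: epow_epow r_def)
    qed
    have T: "T_norm p q s f = epow (\<integral>\<^sup>+ x. epow (II x) r \<partial>lborel) (1/p)"
      unfolding T_norm_def g_def[symmetric] TA ..
    have WH: "epow (Wq c0 c1 q g w) p = HH c0 c1 r G w" for w
    proof -
      obtain x t where w: "w = (x,t)" by (cases w)
      have "Wq c0 c1 q g w = epow (NN c0 c1 G w / DD c0 c1 w) (1/q)"
        unfolding w Wq_def NN_def DD_def G_def by simp
      then show ?thesis using assms(1) by (simp add: epow_epow r_def HH_def)
    qed
    have Z: "Z_norm p q s c0 c1 f = epow Zi (1/p)"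
    proof -
      have "(\<lambda>(x::'a, t). indicator {(x::'a, t). 0 < t} (x, t) * epow (Wq c0 c1 q (Vpow (- s) f) (x, t)) p * ennreal (1 / t))
          = (\<lambda>w. indicator {w. 0 < snd w} w * HH c0 c1 r G w * ennreal (1 / snd w))"
        by (auto simp: fun_eq_iff WH[symmetric] g_def indicator_def)
      then show ?thesis unfolding Z_norm_def Zi_def by simp
    qed
    have "(\<integral>\<^sup>+ x. epow (II x) r \<partial>lborel) \<le> ennreal K * Zi"
      using MI unfolding II_def Zi_def K_def .
    then have "epow (\<integral>\<^sup>+ x. epow (II x) r \<partial>lborel) (1/p) \<le> epow (ennreal K * Zi) (1/p)"
      using assms(2) by (intro epow_mono) auto
    also have "\<dots> = ennreal (K powr (1/p)) * epow Zi (1/p)"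
      using Knn assms(2) by (intro epow_mult) auto
    finally show "T_norm p q s f \<le> ennreal (K powr (1/p)) * Z_norm p q s c0 c1 f"
      unfolding T Z .
  qed
qed


end
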